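(* Let $\alpha>0$ and define $\phi:[0,\infty)\to\mathbb{R}$ by $\phi(t)=e^{-\alpha\left(1+\tan\frac{\pi}{2}t^{2}\right)^{2}}$ for $0\le t<1$ and $\phi(t)=0$ for $t\ge 1$. For each integer $j\ge 1$, let $F_j(\alpha,u)$ be the polynomial in $\alpha,u$ with integer coefficients determined by $$\frac{d^{j}}{dt^{j}}\phi(\sqrt{t})=e^{-\alpha(1+u)^{2}}(-1)^{j}\alpha\left(\frac{\pi}{2}\right)^{j}(1+u^{2})\,F_{j}(\alpha,u),\qquad u=\tan\frac{\pi}{2}t,\quad 0<t<1,$$ valid for all $\alpha>0$. Then for each $j\ge 1$ there exists a number $\alpha_j>0$ such that $F_j(\alpha,u)\ge 0$ for all $\alpha\ge\alpha_j$ and all $u\ge 0$.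
   Context: For example, $F_1(\alpha,u)=2u+2$ and $F_2(\alpha,u)=4\alpha(1+u)^2(1+u^2)-2(1+u^2)-4(1+u)u$. The paper asserts that $F_j(\alpha,u)=a_j\alpha^{j-1}u^{3(j-1)+1}+\sum_{k=0}^{j-2}\sum_{l=0}^{3j-3}a_{kl}\alpha^k u^l$ with $a_j$ a positive integer and $a_{kl}$ integers. *)

theory Defs
  imports "HOL-Analysis.Analysis"
begin

definition phi :: "real \<Rightarrow> real \<Rightarrow> real" where
  "phi \<alpha> t = (if t < 1 then exp (- \<alpha> * (1 + tan (pi / 2 * t\<^sup>2))\<^sup>2) else 0)"

definition int_poly2 :: "(real \<Rightarrow> real \<Rightarrow> real) \<Rightarrow> bool" where
  "int_poly2 P \<longleftrightarrow> (\<exists>N (c :: nat \<Rightarrow> nat \<Rightarrow> int). \<forall>a u.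
      P a u = (\<Sum>k\<le>N. \<Sum>l\<le>N. of_int (c k l) * a ^ k * u ^ l))"

end

theory Submission
  imports Defs "HOL-Computational_Algebra.Polynomial"
begin

fun R :: "nat \<Rightarrow> real \<Rightarrow> real poly" where
  "R 0 a = [:2,2:]"
| "R (Suc m) a = smult a ([:2,2:] * [:1,0,1:] * R m a) - [:0,2:] * R m a - [:1,0,1:] * pderiv (R m a)"

definition Phi :: "nat \<Rightarrow> real \<Rightarrow> real \<Rightarrow> real" where
  "Phi m a u = exp (- a * (1 + u)\<^sup>2) * (-1) ^ Suc m * a * (pi / 2) ^ Suc m * (1 + u\<^sup>2) * poly (R m a) u"

lemma one_plus_sq_pos: "0 < 1 + (y::real)\<^sup>2"
  using zero_le_power2[of y] by linarith

lemma one_plus_sq_ne: "1 + u * u \<noteq> (0::real)"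
  using zero_le_square[of u] by linarith

lemma Phi_deriv:
  "(Phi m a has_real_derivative Phi (Suc m) a u / (pi/2 * (1 + u\<^sup>2))) (at u)"
    unfolding Phi_def[abs_def]
    apply (rule derivative_eq_intros refl poly_DERIV)+
    apply (subst eq_divide_eq)
    apply (simp add: add_pos_nonneg)
    apply (simp add: algebra_simps power2_eq_square one_plus_sq_ne)
    done

lemma E_deriv:
  "((\<lambda>u. exp (- a * (1 + u)\<^sup>2)) has_real_derivative Phi 0 a u / (pi/2 * (1 + u\<^sup>2))) (at u)"
    apply (rule derivative_eq_intros refl)+
    apply (subst eq_divide_eq)
    apply (simp add: add_pos_nonneg)
    apply (simp add: Phi_def algebra_simps power2_eq_square one_plus_sq_ne)
    done

lemma U_deriv:
  assumes "t \<in> {0<..<1::real}"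
  shows "((\<lambda>x. tan (pi/2*x)) has_real_derivative (pi/2*(1+(tan(pi/2*t))\<^sup>2))) (at t)"
proof -
  have h1: "pi/2 * t < pi/2 * 1" using assms by (intro mult_strict_left_mono) auto
  have h2: "0 < pi/2 * t" using assms by (intro mult_pos_pos) auto
  have c: "cos (pi/2*t) > 0" using h1 h2 pi_gt_zero by (intro cos_gt_zero_pi) linarith+
  have "((\<lambda>x. tan (pi/2*x)) has_real_derivative inverse ((cos (pi/2*t))\<^sup>2) * (pi/2)) (at t)"
    by (rule DERIV_chain2[OF DERIV_tan]) (use c in \<open>auto intro!: derivative_eq_intros\<close>)
  moreover have "inverse ((cos (pi/2*t))\<^sup>2) = 1+(tan(pi/2*t))\<^sup>2"
    using tan_sec[of "pi/2*t"] c by (simp add: power_inverse)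
  ultimately show ?thesis by (simp add: mult.commute)
qed

lemma chainU:
  assumes "t \<in> {0<..<1::real}"
    and "\<And>u. (G has_real_derivative G' u / (pi/2 * (1 + u\<^sup>2))) (at u)"
  shows "((\<lambda>x. G (tan (pi/2*x))) has_real_derivative G' (tan (pi/2*t))) (at t)"
proof -
  have "((\<lambda>x. G (tan (pi/2*x))) has_real_derivative
     G' (tan (pi/2*t)) / (pi/2 * (1 + (tan (pi/2*t))\<^sup>2)) * (pi/2*(1+(tan(pi/2*t))\<^sup>2))) (at t)"
    by (rule DERIV_chain2[OF assms(2) U_deriv[OF assms(1)]])
  moreover have "pi/2 * (1 + (tan (pi/2*t))\<^sup>2) \<noteq> 0" using one_plus_sq_pos[of "tan (pi/2*t)"] by simp
  then have eq: "G' (tan (pi/2*t)) / (pi/2 * (1 + (tan (pi/2*t))\<^sup>2)) * (pi/2*(1+(tan(pi/2*t))\<^sup>2)) = G' (tan (pi/2*t))"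
    by (metis divide_inverse mult.assoc left_inverse mult_1_right)
  ultimately show ?thesis unfolding eq by blast
qed

lemma deriv_transfer:
  assumes "(h has_real_derivative D) (at t)" "t \<in> S" "open S" "\<And>s. s \<in> S \<Longrightarrow> f s = h s"
  shows "deriv f t = D"
proof (rule DERIV_imp_deriv)
  show "(f has_real_derivative D) (at t)"
    by (rule has_field_derivative_transform_within_open[OF assms(1) assms(3) assms(2)]) (simp add: assms(4))
qed

lemma phi_sqrt:
  assumes "x \<in> {0<..<1::real}"
  shows "phi a (sqrt x) = exp (- a * (1 + tan (pi/2*x))\<^sup>2)"
  using assms by (simp add: phi_def real_sqrt_lt_1_iff)

lemma deriv_formula:
  assumes "t \<in> {0<..<1::real}"
  shows "(deriv ^^ Suc m) (\<lambda>s. phi a (sqrt s)) t = Phi m a (tan (pi/2*t))"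
  using assms
proof (induction m arbitrary: t)
  case 0
  show ?case
    apply (simp only: funpow.simps o_apply id_apply)
    apply (rule deriv_transfer[where S="{0<..<1}", OF chainU[OF 0 E_deriv] 0])
    by (auto simp: phi_sqrt)
next
  case (Suc m)
  show ?case
    apply (subst funpow.simps(2))
    apply (subst o_apply)
    apply (rule deriv_transfer[where S="{0<..<1}", OF chainU[OF Suc.prems Phi_deriv] Suc.prems])
    by (simp, rule Suc.IH)
qed

fun Q :: "nat \<Rightarrow> nat \<Rightarrow> real poly" where
  "Q 0 k = (if k = 0 then [:2,2:] else 0)"
| "Q (Suc m) k = (if k = 0 then 0 else [:2,2:] * [:1,0,1:] * Q m (k-1)) - [:0,2:] * Q m k - [:1,0,1:] * pderiv (Q m k)"

lemma Q_zero: "m < k \<Longrightarrow> Q m k = 0"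
  by (induction m arbitrary: k) auto

lemma Q_top: "Q m m = [:2,2:] ^ Suc m * [:1,0,1:] ^ m"
  by (induction m) (auto simp: Q_zero algebra_simps)

lemma Q_deg: "degree (Q m k) \<le> m + 1 + 2 * k"
proof (induction m arbitrary: k)
  case 0
  then show ?case by auto
next
  case (Suc m)
  have d1: "degree ((if k = 0 then 0 else [:2,2:] * [:1,0,1:] * Q m (k-1)) :: real poly) \<le> Suc m + 1 + 2 * k"
  proof (cases "k = 0")
    case False
    have "degree ([:2,2:] * [:1,0,1:] * Q m (k-1)) \<le> degree ([:2,2:] * [:1,0,1:] :: real poly) + degree (Q m (k-1))"
      by (rule degree_mult_le)
    also have "\<dots> \<le> 3 + (m + 1 + 2 * (k - 1))"
      using Suc.IH[of "k-1"] degree_mult_le[of "[:2,2:]" "[:1,0,1::real:]"] by simp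
    finally show ?thesis using False by simp
  qed simp
  have d2: "degree ([:0,2:] * Q m k) \<le> Suc m + 1 + 2 * k"
    using degree_mult_le[of "[:0,2:]" "Q m k"] Suc.IH[of k] by simp
  have d3: "degree ([:1,0,1:] * pderiv (Q m k)) \<le> Suc m + 1 + 2 * k"
    using degree_mult_le[of "[:1,0,1:]" "pderiv (Q m k)"] Suc.IH[of k] degree_pderiv[of "Q m k"] by simp
  show ?case
    unfolding Q.simps by (intro degree_diff_le d1 d2 d3)
qed

lemma pderiv_sum': "finite A \<Longrightarrow> pderiv (\<Sum>k\<in>A. f k) = (\<Sum>k\<in>A. pderiv (f k))"
  by (induction A rule: finite_induct) (auto simp: pderiv_add)

lemma smult_sum_right: "smult c (\<Sum>k\<in>A. f k) = (\<Sum>k\<in>A. smult c (f k))"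
  by (induction A rule: infinite_finite_induct) (auto simp: smult_add_right)

lemma R_sum: "R m a = (\<Sum>k\<le>m. smult (a ^ k) (Q m k))"
proof (induction m)
  case 0
  then show ?case by simp
next
  case (Suc m)
  let ?A = "[:2,2:] * [:1,0,1:] :: real poly"
  have s1: "(\<Sum>k\<le>Suc m. smult (a ^ k) (if k = 0 then 0 else ?A * Q m (k-1)))
      = smult a (?A * R m a)"
    unfolding Suc.IH sum.atMost_Suc_shift
    by (simp add: sum_distrib_left smult_sum_right mult_smult_right smult_smult mult.assoc)
  have s2: "(\<Sum>k\<le>Suc m. smult (a ^ k) ([:0,2:] * Q m k)) = [:0,2:] * R m a"
    unfolding Suc.IH by (simp add: Q_zero sum_distrib_left)
  have s3: "(\<Sum>k\<le>Suc m. smult (a ^ k) ([:1,0,1:] * pderiv (Q m k))) = [:1,0,1:] * pderiv (R m a)"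
    unfolding Suc.IH by (simp add: Q_zero sum_distrib_left pderiv_sum' pderiv_smult)
  show ?case
    by (simp only: R.simps Q.simps smult_diff_right sum_subtractf s1 s2 s3)
qed

lemma poly_bound:
  fixes p :: "real poly"
  assumes "degree p \<le> n" "0 \<le> u"
  shows "\<bar>poly p u\<bar> \<le> (\<Sum>i\<le>degree p. \<bar>coeff p i\<bar>) * (1 + u) ^ n"
proof -
  have "\<bar>poly p u\<bar> = \<bar>\<Sum>i\<le>degree p. coeff p i * u ^ i\<bar>" by (simp add: poly_altdef)
  also have "\<dots> \<le> (\<Sum>i\<le>degree p. \<bar>coeff p i * u ^ i\<bar>)" by (rule sum_abs)
  also have "\<dots> \<le> (\<Sum>i\<le>degree p. \<bar>coeff p i\<bar> * (1 + u) ^ n)"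
  proof (rule sum_mono)
    fix i assume i: "i \<in> {..degree p}"
    have "u ^ i \<le> (1 + u) ^ i" using assms(2) by (intro power_mono) auto
    also have "\<dots> \<le> (1 + u) ^ n" using i assms by (intro power_increasing) auto
    finally have "u ^ i \<le> (1 + u) ^ n" .
    then show "\<bar>coeff p i * u ^ i\<bar> \<le> \<bar>coeff p i\<bar> * (1 + u) ^ n"
      using assms(2) by (simp add: abs_mult mult_left_mono)
  qed
  also have "\<dots> = (\<Sum>i\<le>degree p. \<bar>coeff p i\<bar>) * (1 + u) ^ n" by (simp add: sum_distrib_right)
  finally show ?thesis .
qed

lemma Q_top_bound:
  assumes "0 \<le> (u::real)"
  shows "(1 + u) ^ (3 * m + 1) \<le> poly (Q m m) u"
proof -
  have p1: "poly [:2,2:] u = 2 + 2 * u" "poly [:1,0,1:] u = 1 + u * u" by simp_all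
  have "poly (Q m m) u = (2 + 2 * u) ^ Suc m * (1 + u * u) ^ m"
    by (simp only: Q_top poly_mult poly_power p1)
  also have "\<dots> = 2 * (1 + u) ^ Suc m * (2 + 2 * u * u) ^ m"
  proof -
    have a1: "(2 + 2 * u) = 2 * (1 + u)" "2 + 2 * u * u = 2 * (1 + u * u)" by simp_all
    show ?thesis unfolding a1 power_mult_distrib by (simp only: power_Suc ac_simps)
  qed
  also have "\<dots> \<ge> (1 + u) ^ Suc m * ((1 + u) ^ 2) ^ m"
  proof -
    have h: "0 \<le> (u - 1) * (u - 1)" by simp
    have "(1 + u) ^ 2 \<le> 2 + 2 * u * u"
      using h unfolding power2_eq_square by (simp add: algebra_simps)
    then have "((1 + u) ^ 2) ^ m \<le> (2 + 2 * u * u) ^ m"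
      by (intro power_mono) auto
    then have "(1 + u) ^ Suc m * ((1 + u) ^ 2) ^ m \<le> (1 + u) ^ Suc m * (2 + 2 * u * u) ^ m"
      using assms by (intro mult_left_mono) auto
    also have "\<dots> \<le> 2 * (1 + u) ^ Suc m * (2 + 2 * u * u) ^ m"
      using assms by (simp add: zero_le_mult_iff)
    finally show ?thesis .
  qed
  finally have L: "(1 + u) ^ Suc m * ((1 + u) ^ 2) ^ m \<le> poly (Q m m) u" .
  have eq: "(1 + u) ^ Suc m * ((1 + u) ^ 2) ^ m = (1 + u) ^ (3 * m + 1)"
    by (simp only: power_mult[symmetric] power_add[symmetric]) simp
  show ?thesis using L unfolding eq .
qed

lemma R_pos: "\<exists>A>0. \<forall>a\<ge>A. \<forall>u\<ge>0. 0 \<le> poly (R m a) u"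
proof -
  define N where "N = 3 * m + 1"
  define Ck where "Ck k = (\<Sum>i\<le>degree (Q m k). \<bar>coeff (Q m k) i\<bar>)" for k
  define C where "C = (\<Sum>k<m. Ck k)"
  have Ck_nn: "0 \<le> Ck k" for k unfolding Ck_def by (simp add: sum_nonneg)
  show ?thesis
  proof (intro exI[of _ "max 1 C"] conjI allI impI)
    show "0 < max 1 C" by simp
    fix a u :: real assume a: "max 1 C \<le> a" and u: "0 \<le> u"
    have a1: "1 \<le> a" and aC: "C \<le> a" using a by auto
    have split: "poly (R m a) u = a ^ m * poly (Q m m) u + (\<Sum>k<m. a ^ k * poly (Q m k) u)"
      by (simp add: R_sum poly_sum lessThan_Suc_atMost[symmetric])
    have top: "a ^ m * (1 + u) ^ N \<le> a ^ m * poly (Q m m) u"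
      using Q_top_bound[OF u, of m] a1 unfolding N_def by (intro mult_left_mono) auto
    show "0 \<le> poly (R m a) u"
    proof (cases m)
      case 0
      then show ?thesis using split top u a1 by (simp add: N_def)
    next
      case (Suc m')
      have bnd: "- (a ^ m' * Ck k * (1 + u) ^ N) \<le> a ^ k * poly (Q m k) u" if k: "k < m" for k
      proof -
        have "\<bar>poly (Q m k) u\<bar> \<le> Ck k * (1 + u) ^ N"
          unfolding Ck_def
          by (rule poly_bound[OF _ u]) (use Q_deg[of m k] k in \<open>simp add: N_def\<close>)
        moreover have "a ^ k \<le> a ^ m'" using k Suc a1 by (intro power_increasing) auto
        moreover have "0 \<le> a ^ k" using a1 by simp
        moreover have "0 \<le> Ck k * (1 + u) ^ N" using Ck_nn u by simp
        ultimately have "\<bar>a ^ k * poly (Q m k) u\<bar> \<le> a ^ m' * (Ck k * (1 + u) ^ N)"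
          unfolding abs_mult by (intro mult_mono) auto
        then show ?thesis by (simp add: mult.assoc)
      qed
      have "- (a ^ m' * C * (1 + u) ^ N) = (\<Sum>k<m. - (a ^ m' * Ck k * (1 + u) ^ N))"
        unfolding C_def by (simp add: sum_distrib_left sum_distrib_right sum_negf)
      also have "\<dots> \<le> (\<Sum>k<m. a ^ k * poly (Q m k) u)"
        by (rule sum_mono) (use bnd in auto)
      finally have low: "- (a ^ m' * C * (1 + u) ^ N) \<le> (\<Sum>k<m. a ^ k * poly (Q m k) u)" .
      have "a ^ m' * C * (1 + u) ^ N \<le> a ^ m' * a * (1 + u) ^ N"
        using aC a1 u by (intro mult_right_mono mult_left_mono) auto
      also have "\<dots> = a ^ m * (1 + u) ^ N" using Suc by (simp add: ac_simps)
      finally show ?thesis using split top low by linarith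
    qed
  qed
qed

theorem lemma2p1:
  fixes j :: nat and F :: "real \<Rightarrow> real \<Rightarrow> real"
  assumes "j \<ge> 1"
    and "int_poly2 F"
    and "\<forall>\<alpha>>0. \<forall>t\<in>{0<..<1}.
           (deriv ^^ j) (\<lambda>s. phi \<alpha> (sqrt s)) t =
             exp (- \<alpha> * (1 + tan (pi / 2 * t))\<^sup>2) * (-1) ^ j * \<alpha> * (pi / 2) ^ j
             * (1 + (tan (pi / 2 * t))\<^sup>2) * F \<alpha> (tan (pi / 2 * t))"
  shows "\<exists>\<alpha>j>0. \<forall>\<alpha>\<ge>\<alpha>j. \<forall>u\<ge>0. F \<alpha> u \<ge> 0"
proof -
  obtain m where jm: "j = Suc m" using assms(1) by (cases j) auto
  obtain A where A: "A > 0" "\<forall>a\<ge>A. \<forall>u\<ge>0. 0 \<le> poly (R m a) u" using R_pos by blast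
  obtain N and c :: "nat \<Rightarrow> nat \<Rightarrow> int" where Fc:
    "\<forall>a u. F a u = (\<Sum>k\<le>N. \<Sum>l\<le>N. of_int (c k l) * a ^ k * u ^ l)"
    using assms(2) unfolding int_poly2_def by blast
  show ?thesis
  proof (intro exI[of _ A] conjI allI impI)
    show "0 < A" by (rule A(1))
    fix \<alpha> u :: real assume al: "A \<le> \<alpha>" and u: "0 \<le> u"
    have apos: "\<alpha> > 0" using al A(1) by simp
    have pos: "0 \<le> F \<alpha> v" if v: "0 < v" for v
    proof -
      define t where "t = arctan v / (pi / 2)"
      have t: "t \<in> {0<..<1}" using v arctan_ubound[of v] unfolding t_def by (auto simp: field_simps)
      have tt: "tan (pi / 2 * t) = v" unfolding t_def by (simp add: tan_arctan)
      define K where "K = exp (- \<alpha> * (1 + v)\<^sup>2) * (-1) ^ j * \<alpha> * (pi / 2) ^ j * (1 + v\<^sup>2)"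
      have e1: "(deriv ^^ j) (\<lambda>s. phi \<alpha> (sqrt s)) t = K * F \<alpha> v"
        using assms(3)[rule_format, OF apos t] unfolding tt K_def .
      have e2: "(deriv ^^ j) (\<lambda>s. phi \<alpha> (sqrt s)) t = K * poly (R m \<alpha>) v"
        using deriv_formula[OF t, of m \<alpha>] unfolding tt K_def Phi_def jm .
      have "K \<noteq> 0" unfolding K_def using apos one_plus_sq_pos[of v] by simp
      then have "F \<alpha> v = poly (R m \<alpha>) v" using e1 e2 by simp
      then show ?thesis using A(2) al v by simp
    qed
    have cont: "continuous_on UNIV (F \<alpha>)"
    proof -
      have "F \<alpha> = (\<lambda>u. \<Sum>k\<le>N. \<Sum>l\<le>N. of_int (c k l) * \<alpha> ^ k * u ^ l)" using Fc by auto
      moreover have "continuous_on UNIV (\<lambda>u. \<Sum>k\<le>N. \<Sum>l\<le>N. of_int (c k l) * \<alpha> ^ k * (u::real) ^ l)"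
        by (intro continuous_intros)
      ultimately show ?thesis by simp
    qed
    show "0 \<le> F \<alpha> u"
    proof (cases "u = 0")
      case False
      then show ?thesis using pos u by simp
    next
      case True
      have lim: "(F \<alpha> \<longlongrightarrow> F \<alpha> 0) (at_right 0)"
        using cont by (metis UNIV_I continuous_on_def tendsto_within_subset top_greatest open_UNIV continuous_on_eq_continuous_at continuous_at filterlim_at_split)
      have ev: "eventually (\<lambda>v. 0 \<le> F \<alpha> v) (at_right (0::real))"
        using eventually_at_right_less[of 0] pos by (auto elim: eventually_mono)
      have "0 \<le> F \<alpha> 0" by (rule tendsto_lowerbound[OF lim ev]) simp
      then show ?thesis using True by simp
    qed
  qed
qed

end
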